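(* $\mathcal{TC}(\mathrm{RL}_1^P)=\mathrm{FIN}$, the family of all finite languages.
   Context: A right-linear grammar is $G=(N,T,P,S)$ with rules $A\to wB$ or $A\to w$ ($A,B\in N$, $w\in T^*$). For a regular language $L$, $\mathrm{Prod}_{RL}(L)$ is the minimum of $|P|$ over all right-linear grammars generating $L$, and $\mathrm{RL}_n^P=\{L\text{ regular}:\mathrm{Prod}_{RL}(L)\le n\}$. A tree-controlled grammar is a quintuple $G=(N,T,P,S,R)$ where $(N,T,P,S)$ is a context-free grammar whose rules are all non-erasing, except that $S\to\lambda$ is allowed if $S$ does not occur on the right-hand side of any rule, and $R\subseteq (N\cup T)^*$ is a regular control language. The word of level $j$ of a derivation tree is the word of all nodes of depth $j$ read left to right. $L(G)$ consists of all $z\in T^*$ having a derivation tree with yield $z$ such that the words of all levels except the last belong to $R$. For a family $\mathcal F$ of regular languages, $\mathcal{TC}(\mathcal F)$ is the family of languages generated by tree-controlled grammars with control language in $\mathcal F$. *)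

theory Defs
  imports Main
begin

(* Grammar symbols: nonterminals are natural numbers (any finite nonterminal
   set can be renamed into nat), terminals are of an arbitrary type 't. *)
datatype 't sym = NT nat | Tm 't

(* G = (N, T, P, S); a rule (A, w, None) is A -> w, a rule (A, w, Some B) is A -> w B *)
type_synonym 'b rlg = "nat set \<times> 'b set \<times> (nat \<times> 'b list \<times> nat option) set \<times> nat"

definition rlg_wf :: "'b rlg \<Rightarrow> bool" where
  "rlg_wf G = (case G of (N, T, P, S) \<Rightarrow>
     finite N \<and> finite T \<and> finite P \<and> S \<in> N \<and>
     (\<forall>(A, w, B) \<in> P. A \<in> N \<and> set w \<subseteq> T \<and> (\<forall>C. B = Some C \<longrightarrow> C \<in> N)))"

inductive rl_derives :: "(nat \<times> 'b list \<times> nat option) set \<Rightarrow> nat \<Rightarrow> 'b list \<Rightarrow> bool"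
  for P where
  term_rule: "(A, w, None) \<in> P \<Longrightarrow> rl_derives P A w"
| cont_rule: "(A, u, Some B) \<in> P \<Longrightarrow> rl_derives P B v \<Longrightarrow> rl_derives P A (u @ v)"

definition rl_lang :: "'b rlg \<Rightarrow> 'b list set" where
  "rl_lang G = (case G of (N, T, P, S) \<Rightarrow> {w. rl_derives P S w})"

definition rl_prods :: "'b rlg \<Rightarrow> (nat \<times> 'b list \<times> nat option) set" where
  "rl_prods G = (case G of (N, T, P, S) \<Rightarrow> P)"

definition regular :: "'b list set \<Rightarrow> bool" where
  "regular L = (\<exists>G. rlg_wf G \<and> rl_lang G = L)"

definition Prod_RL :: "'b list set \<Rightarrow> nat" where
  "Prod_RL L = (LEAST k. \<exists>G. rlg_wf G \<and> rl_lang G = L \<and> card (rl_prods G) = k)"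

definition RLP :: "nat \<Rightarrow> 'b list set set" where
  "RLP n = {L. regular L \<and> Prod_RL L \<le> n}"

(* Inner A ts: a node labelled by nonterminal A whose children are ts;
   Inner A [] represents an application of the rule A -> lambda. *)
datatype 't dtree = Leaf 't | Inner nat "'t dtree list"

fun droot :: "'t dtree \<Rightarrow> 't sym" where
  "droot (Leaf a) = Tm a"
| "droot (Inner A ts) = NT A"

fun is_dtree :: "(nat \<times> 't sym list) set \<Rightarrow> 't set \<Rightarrow> 't dtree \<Rightarrow> bool" where
  "is_dtree P T (Leaf a) = (a \<in> T)"
| "is_dtree P T (Inner A ts) = ((A, map droot ts) \<in> P \<and> (\<forall>t \<in> set ts. is_dtree P T t))"

fun dyield :: "'t dtree \<Rightarrow> 't list" where
  "dyield (Leaf a) = [a]"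
| "dyield (Inner A ts) = concat (map dyield ts)"

(* height = depth of the last level (an inner node with no children, i.e. a
   lambda-rule, has a level 1 consisting of the empty word lambda) *)
fun dheight :: "'t dtree \<Rightarrow> nat" where
  "dheight (Leaf a) = 0"
| "dheight (Inner A ts) = Suc (foldr max (map dheight ts) 0)"

fun level :: "nat \<Rightarrow> 't dtree \<Rightarrow> 't sym list" where
  "level 0 (Leaf a) = [Tm a]"
| "level 0 (Inner A ts) = [NT A]"
| "level (Suc j) (Leaf a) = []"
| "level (Suc j) (Inner A ts) = concat (map (level j) ts)"

type_synonym 't tcg = "nat set \<times> 't set \<times> (nat \<times> 't sym list) set \<times> nat \<times> 't sym list set"

definition sym_in :: "nat set \<Rightarrow> 't set \<Rightarrow> 't sym \<Rightarrow> bool" where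
  "sym_in N T x = (case x of NT B \<Rightarrow> B \<in> N | Tm a \<Rightarrow> a \<in> T)"

definition tcg_wf :: "'t tcg \<Rightarrow> bool" where
  "tcg_wf G = (case G of (N, T, P, S, R) \<Rightarrow>
     finite N \<and> finite T \<and> finite P \<and> S \<in> N \<and>
     (\<forall>(A, w) \<in> P. A \<in> N \<and> (\<forall>x \<in> set w. sym_in N T x) \<and>
        (w = [] \<longrightarrow> A = S \<and> (\<forall>(B, u) \<in> P. NT S \<notin> set u))) \<and>
     R \<subseteq> {w. \<forall>x \<in> set w. sym_in N T x} \<and> regular R)"

definition tc_control :: "'t tcg \<Rightarrow> 't sym list set" where
  "tc_control G = (case G of (N, T, P, S, R) \<Rightarrow> R)"

definition tc_lang :: "'t tcg \<Rightarrow> 't list set" where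
  "tc_lang G = (case G of (N, T, P, S, R) \<Rightarrow>
     {z. \<exists>t. is_dtree P T t \<and> droot t = NT S \<and> dyield t = z \<and>
            (\<forall>j < dheight t. level j t \<in> R)})"

definition TC :: "'t sym list set set \<Rightarrow> 't list set set" where
  "TC F = {L. \<exists>G. tcg_wf G \<and> tc_control G \<in> F \<and> tc_lang G = L}"

end

theory Submission
  imports Defs
begin

lemma foldr_max_ge: "x \<in> set ts \<Longrightarrow> f x \<le> foldr max (map f ts) (0::nat)"
  by (induction ts) auto

lemma foldr_max_le: "(\<forall>x\<in>set ts. f x \<le> m) \<Longrightarrow> foldr max (map f ts) (0::nat) \<le> m"
  by (induction ts) auto

lemma level0: "level 0 t = [droot t]"
  by (cases t) auto

lemma h0_leaf: "dheight t = 0 \<Longrightarrow> \<exists>a. t = Leaf a"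
  by (cases t) auto

lemma level1: "level (Suc 0) (Inner A ts) = map droot ts"
  by (induction ts) (auto simp: level0)

lemma map_droot_single: "map droot ts = [x] \<Longrightarrow> \<exists>t'. ts = [t'] \<and> droot t' = x"
  by (cases ts) auto

lemma chain:
  "dheight t = n \<Longrightarrow> is_dtree P T t \<Longrightarrow> droot t = NT S \<Longrightarrow>
   (\<forall>j<dheight t. level j t = [NT S]) \<Longrightarrow> (S, map Tm (dyield t)) \<in> P"
proof (induction n arbitrary: t)
  case 0
  then show ?case by (cases t) auto
next
  case (Suc n)
  obtain ts where t: "t = Inner S ts" using Suc.prems(3) by (cases t) auto
  have P: "(S, map droot ts) \<in> P" and sub: "\<forall>x\<in>set ts. is_dtree P T x"
    using Suc.prems(2) t by auto
  have hs: "dheight t = Suc (foldr max (map dheight ts) 0)" using t by simp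
  show ?case
  proof (cases n)
    case 0
    have "\<forall>x\<in>set ts. dheight x = 0"
      using foldr_max_ge[of _ ts dheight] hs Suc.prems(1) 0 by fastforce
    hence leaves: "\<forall>x\<in>set ts. \<exists>a. x = Leaf a" using h0_leaf by blast
    have "map droot ts = map Tm (dyield t)"
      using leaves unfolding t by (induction ts) auto
    then show ?thesis using P by simp
  next
    case (Suc m)
    have "level (Suc 0) t = [NT S]" using Suc.prems(4) Suc.prems(1) Suc by auto
    hence "map droot ts = [NT S]" using t level1 by metis
    then obtain t' where ts: "ts = [t']" and r: "droot t' = NT S"
      using map_droot_single by blast
    have ht: "dheight t = Suc (dheight t')" using t ts by simp
    have "(S, map Tm (dyield t')) \<in> P"
    proof (rule Suc.IH)
      show "dheight t' = n" using ht Suc.prems(1) by simp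
      show "is_dtree P T t'" using sub ts by simp
      show "droot t' = NT S" by fact
      show "\<forall>j<dheight t'. level j t' = [NT S]"
      proof (intro allI impI)
        fix j assume "j < dheight t'"
        hence "Suc j < dheight t" using ht by simp
        hence "level (Suc j) t = [NT S]" using Suc.prems(4) by blast
        thus "level j t' = [NT S]" using t ts by simp
      qed
    qed
    then show ?thesis using t ts by simp
  qed
qed

lemma rl_unique:
  assumes "finite P" "card P \<le> 1"
  shows "rl_derives P A v \<Longrightarrow> \<exists>B. (B, v, None) \<in> P"
proof (induction rule: rl_derives.induct)
  case (term_rule A w) then show ?case by blast
next
  case (cont_rule A u B v)
  then obtain C where "(C, v, None) \<in> P" by blast
  with cont_rule(1) assms have False by (metis card_le_Suc0_iff_eq One_nat_def option.distinct(1) prod.inject)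
  then show ?case ..
qed

lemma RLP1_single:
  assumes "R \<in> RLP 1" "x \<in> R" "y \<in> R" shows "x = y"
proof -
  from assms(1) have reg: "regular R" and le: "Prod_RL R \<le> 1" by (auto simp: RLP_def)
  from reg obtain G where "rlg_wf G \<and> rl_lang G = R" by (auto simp: regular_def)
  hence "\<exists>G. rlg_wf G \<and> rl_lang G = R \<and> card (rl_prods G) = card (rl_prods G)" by blast
  hence "\<exists>k G. rlg_wf G \<and> rl_lang G = R \<and> card (rl_prods G) = k" by blast
  hence "\<exists>G. rlg_wf G \<and> rl_lang G = R \<and> card (rl_prods G) = Prod_RL R"
    unfolding Prod_RL_def by (rule LeastI_ex)
  then obtain N T P S where wf: "rlg_wf (N,T,P,S)" and L: "rl_lang (N,T,P,S) = R"
    and c: "card P = Prod_RL R" by (auto simp: rl_prods_def)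
  have fin: "finite P" using wf by (simp add: rlg_wf_def)
  have c1: "card P \<le> 1" using c le by simp
  from assms(2,3) L have "rl_derives P S x" "rl_derives P S y" by (auto simp: rl_lang_def)
  then obtain B B' where "(B, x, None) \<in> P" "(B', y, None) \<in> P"
    using rl_unique[OF fin c1] by blast
  with fin c1 show ?thesis by (metis card_le_Suc0_iff_eq One_nat_def prod.inject)
qed

lemma tc_sub:
  assumes "tc_lang (N,T,P,S,R) = L" "\<forall>x\<in>R. \<forall>y\<in>R. x = y"
  shows "L \<subseteq> {u. (S, map Tm u) \<in> P}"
proof
  fix z assume "z \<in> L"
  then obtain t where t: "is_dtree P T t" "droot t = NT S" "dyield t = z"
    "\<forall>j<dheight t. level j t \<in> R" using assms(1) by (auto simp: tc_lang_def)
  have "dheight t > 0" using t(2) by (cases t) auto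
  hence "[NT S] \<in> R" using t(4) t(2) by (metis level0)
  hence "\<forall>j<dheight t. level j t = [NT S]" using t(4) assms(2) by blast
  from chain[OF refl t(1) t(2) this] t(3) show "z \<in> {u. (S, map Tm u) \<in> P}" by simp
qed

lemma inj_mapTm: "inj (map Tm)"
  by (rule inj_mapI) (auto intro: injI)

lemma single_RLP: "{[NT 0]} \<in> RLP 1"
proof -
  let ?G = "({0::nat}, {NT 0}, {(0::nat, [NT 0], None)}, 0::nat) :: 'a sym rlg"
  have wf: "rlg_wf ?G" by (simp add: rlg_wf_def)
  have d: "rl_derives {(0::nat, [NT 0 :: 'a sym], None)} 0 w \<longleftrightarrow> w = [NT 0]" for w
  proof
    assume "rl_derives {(0::nat, [NT 0 :: 'a sym], None)} 0 w"
    then obtain B where "(B, w, None) \<in> {(0::nat, [NT 0 :: 'a sym], None)}"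
      using rl_unique[of "{(0::nat, [NT 0 :: 'a sym], None)}"] by auto
    thus "w = [NT 0]" by simp
  next
    assume "w = [NT 0]" thus "rl_derives {(0::nat, [NT 0 :: 'a sym], None)} 0 w"
      by (auto intro: rl_derives.term_rule)
  qed
  have L: "rl_lang ?G = {[NT 0]}" using d by (auto simp: rl_lang_def)
  have "Prod_RL {[NT 0 :: 'a sym]} \<le> 1"
    unfolding Prod_RL_def
    by (rule Least_le, rule exI[of _ ?G]) (use wf L in \<open>simp add: rl_prods_def\<close>)
  moreover have "regular {[NT 0 :: 'a sym]}" using wf L by (auto simp: regular_def)
  ultimately show ?thesis by (simp add: RLP_def)
qed

theorem mainTheorem5:
  shows "TC (RLP 1) = {L :: 't list set. finite L}"
proof
  show "TC (RLP 1) \<subseteq> {L :: 't list set. finite L}"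
  proof
    fix L :: "'t list set" assume "L \<in> TC (RLP 1)"
    then obtain N T P S R where G: "tcg_wf (N,T,P,S,R)" "R \<in> RLP 1" "tc_lang (N,T,P,S,R) = L"
      by (auto simp: TC_def tc_control_def)
    have "\<forall>x\<in>R. \<forall>y\<in>R. x = y" using RLP1_single[OF G(2)] by blast
    from tc_sub[OF G(3) this] have sub: "L \<subseteq> map Tm -` (snd ` P)" by force
    have "finite P" using G(1) by (simp add: tcg_wf_def)
    hence "finite (map Tm -` (snd ` P))" by (intro finite_vimageI finite_imageI inj_mapTm)
    with sub show "L \<in> {L. finite L}" using finite_subset by blast
  qed
next
  show "{L :: 't list set. finite L} \<subseteq> TC (RLP 1)"
  proof
    fix L :: "'t list set" assume "L \<in> {L. finite L}"
    hence fin: "finite L" by simp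
    let ?P = "(\<lambda>w. (0::nat, map Tm w)) ` L"
    let ?T = "\<Union>(set ` L)"
    let ?G = "({0::nat}, ?T, ?P, 0::nat, {[NT 0]}) :: 't tcg"
    have wf: "tcg_wf ?G"
      unfolding tcg_wf_def
    proof (simp only: prod.case, intro conjI)
      show "finite {0::nat}" by simp
      show "finite ?T" using fin by simp
      show "finite ?P" using fin by simp
      show "(0::nat) \<in> {0}" by simp
      show "\<forall>(A, w)\<in>?P. A \<in> {0} \<and> (\<forall>x\<in>set w. sym_in {0} ?T x) \<and>
        (w = [] \<longrightarrow> A = 0 \<and> (\<forall>(B, u)\<in>?P. NT 0 \<notin> set u))"
        by (auto simp: sym_in_def)
      show "{[NT 0]} \<subseteq> {w. \<forall>x\<in>set w. sym_in {0} ?T x}" by (simp add: sym_in_def)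
      show "regular {[NT (0::nat)] :: 't sym list}" using single_RLP unfolding RLP_def by blast
    qed
    have "tc_lang ?G = L"
    proof
      show "tc_lang ?G \<subseteq> L"
      proof
        fix z assume "z \<in> tc_lang ?G"
        hence "(0, map Tm z) \<in> ?P" using tc_sub[of "{0}" ?T ?P 0 "{[NT 0]}" "tc_lang ?G"] by blast
        then obtain w where "w \<in> L" "map Tm z = map Tm w" by blast
        thus "z \<in> L" using inj_mapTm by (metis injD)
      qed
    next
      show "L \<subseteq> tc_lang ?G"
      proof
        fix w assume w: "w \<in> L"
        let ?t = "Inner 0 (map Leaf w) :: 't dtree"
        have "is_dtree ?P ?T ?t" using w by (auto simp: comp_def)
        moreover have "dyield ?t = w" by (induction w) auto
        moreover have "dheight ?t = 1"
        proof -
          have "foldr max (map dheight (map Leaf w)) 0 = (0::nat)" by (induction w) auto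
          thus ?thesis by simp
        qed
        ultimately show "w \<in> tc_lang ?G" unfolding tc_lang_def by (auto intro!: exI[of _ ?t])
      qed
    qed
    moreover have "tc_control ?G \<in> RLP 1" using single_RLP by (simp add: tc_control_def)
    ultimately show "L \<in> TC (RLP 1)" using wf unfolding TC_def by blast
  qed
qed

end
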